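(* Let $\mu$ be a Borel probability measure on $[0,1]^k$, let $\mathcal E_1,\mathcal E_2,\dots$ be bounded Borel subsets of $\mathbb R^k$, put $\mathcal E_\infty=\limsup_{n\to\infty}\mathcal E_n$, and let $C\geqslant1$. For each $n$ let $f_n:\mathbb R^k\to[0,\infty)$ be bounded, measurable and supported on $\mathcal E_n$. Suppose the ETP and VTP hold for $(f_n)$ and $\mu$, that $\sum_{n=1}^\infty\lambda(f_n)=\infty$, and that \[ \sum_{m,n\leqslant N}\lambda(f_mf_n)\leqslant C\,E_N(\lambda)^2+O(1)\qquad(N\in\mathbb N). \] Then $\mu(\mathcal E_\infty)\geqslant1/C$.
   Context: $\lambda$ denotes Lebesgue measure on $[0,1]^k$, and for a measure $\nu$ on $[0,1]^k$, $\nu(f)=\int_{[0,1]^k}f\,d\nu$. Put \[ E_N(\nu)=\sum_{n\leqslant N}\nu(f_n),\qquad V_N(\nu)=\int_{[0,1]^k}\Big(\sum_{n\leqslant N}(f_n(\mathbf x)-\lambda(f_n))\Big)^2d\nu(\mathbf x). \] The expectation transference principle (ETP) holds if $E_N(\mu)=(1+o(1))E_N(\lambda)+O(1)$ as $N\to\infty$. The variance transference principle (VTP) holds if $V_N(\mu)=V_N(\lambda)+o(E_N(\mu)^2)+O(1)$ along some sequence of $N\to\infty$. *)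

theory Defs
  imports "HOL-Probability.Probability"
begin

definition unit_cube :: "'a::euclidean_space set" where
  "unit_cube = cbox 0 One"

definition cube_int :: "'a::euclidean_space measure \<Rightarrow> ('a \<Rightarrow> real) \<Rightarrow> real" where
  "cube_int \<nu> f = (LINT x:unit_cube|\<nu>. f x)"

text \<open>Lebesgue measure on [0,1]^k, used via integrals over the cube w.r.t. lborel.\<close>
abbreviation leb :: "'a::euclidean_space measure" where
  "leb \<equiv> lborel"

definition E_N :: "'a::euclidean_space measure \<Rightarrow> (nat \<Rightarrow> 'a \<Rightarrow> real) \<Rightarrow> nat \<Rightarrow> real" where
  "E_N \<nu> f N = (\<Sum>n\<in>{1..N}. cube_int \<nu> (f n))"

definition V_N :: "'a::euclidean_space measure \<Rightarrow> (nat \<Rightarrow> 'a \<Rightarrow> real) \<Rightarrow> nat \<Rightarrow> real" where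
  "V_N \<nu> f N = (LINT x:unit_cube|\<nu>. (\<Sum>n\<in>{1..N}. f n x - cube_int leb (f n))\<^sup>2)"

definition ETP :: "(nat \<Rightarrow> 'a::euclidean_space \<Rightarrow> real) \<Rightarrow> 'a measure \<Rightarrow> bool" where
  "ETP f \<mu> \<longleftrightarrow> (\<exists>g h. g \<longlonglongrightarrow> 0 \<and> Bseq h \<and>
      (\<forall>N. E_N \<mu> f N = (1 + g N) * E_N leb f N + h N))"

definition VTP :: "(nat \<Rightarrow> 'a::euclidean_space \<Rightarrow> real) \<Rightarrow> 'a measure \<Rightarrow> bool" where
  "VTP f \<mu> \<longleftrightarrow> (\<exists>s g h. strict_mono (s :: nat \<Rightarrow> nat) \<and> g \<longlonglongrightarrow> 0 \<and> Bseq h \<and>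
      (\<forall>j. V_N \<mu> f (s j) = V_N leb f (s j) + g j * (E_N \<mu> f (s j))\<^sup>2 + h j))"

end

theory Submission
  imports Defs
begin


definition bnd :: "('a::euclidean_space \<Rightarrow> real) \<Rightarrow> bool" where
  "bnd g \<longleftrightarrow> g \<in> borel_measurable borel \<and> (\<exists>B. \<forall>x. \<bar>g x\<bar> \<le> B)"

lemma bnd_const: "bnd (\<lambda>x. c)"
  unfolding bnd_def by auto

lemma bnd_add: "bnd g \<Longrightarrow> bnd h \<Longrightarrow> bnd (\<lambda>x. g x + h x)"
  unfolding bnd_def
proof (elim conjE exE, intro conjI)
  fix B1 B2 assume "\<forall>x. \<bar>g x\<bar> \<le> B1" "\<forall>x. \<bar>h x\<bar> \<le> B2"
  then show "\<exists>B. \<forall>x. \<bar>g x + h x\<bar> \<le> B"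
    by (intro exI[of _ "B1+B2"] allI) (metis abs_triangle_ineq add_mono order_trans)
qed auto

lemma bnd_mult: "bnd g \<Longrightarrow> bnd h \<Longrightarrow> bnd (\<lambda>x. g x * h x)"
  unfolding bnd_def
proof (elim conjE exE, intro conjI)
  fix B1 B2 assume a: "\<forall>x. \<bar>g x\<bar> \<le> B1" "\<forall>x. \<bar>h x\<bar> \<le> B2"
  show "\<exists>B. \<forall>x. \<bar>g x * h x\<bar> \<le> B"
  proof (intro exI allI)
    fix x
    have "\<bar>g x * h x\<bar> = \<bar>g x\<bar> * \<bar>h x\<bar>" by (simp add: abs_mult)
    also have "\<dots> \<le> B1 * B2" using a by (intro mult_mono) auto
    finally show "\<bar>g x * h x\<bar> \<le> B1 * B2" .
  qed
qed auto

lemma bnd_diff: "bnd g \<Longrightarrow> bnd h \<Longrightarrow> bnd (\<lambda>x. g x - h x)"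
proof -
  assume "bnd g" "bnd h"
  then have "bnd (\<lambda>x. g x + (-1) * h x)" by (intro bnd_add bnd_mult bnd_const)
  then show ?thesis by simp
qed

lemma bnd_sum: "finite A \<Longrightarrow> (\<And>i. i \<in> A \<Longrightarrow> bnd (g i)) \<Longrightarrow> bnd (\<lambda>x. \<Sum>i\<in>A. g i x)"
  by (induction A rule: finite_induct) (auto intro: bnd_add bnd_const)

lemma bnd_sq: "bnd g \<Longrightarrow> bnd (\<lambda>x. (g x)\<^sup>2)"
  unfolding power2_eq_square by (rule bnd_mult)

lemma bnd_indicator: "A \<in> sets borel \<Longrightarrow> bnd (indicator A)"
  unfolding bnd_def by (intro conjI exI[of _ 1]) (auto split: split_indicator)

lemma cube_borel: "unit_cube \<in> sets borel"
  unfolding unit_cube_def by simp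

lemma cube_int_eq: "cube_int M g = integral\<^sup>L M (\<lambda>x. indicator unit_cube x * g x)"
  unfolding cube_int_def set_lebesgue_integral_def by simp

lemma integrable_cube:
  assumes M: "sets M = sets borel" "emeasure M unit_cube < \<infinity>" and g: "bnd g"
  shows "integrable M (\<lambda>x. indicator unit_cube x * g x)"
proof -
  obtain B where B: "\<forall>x. \<bar>g x\<bar> \<le> B" and gm: "g \<in> borel_measurable borel" using g unfolding bnd_def by auto
  have cs: "unit_cube \<in> sets M" using M cube_borel by simp
  have "integrable M (\<lambda>x. B * indicator unit_cube x)"
    using cs M(2) by (intro integrable_mult_right) auto
  moreover have "(\<lambda>x. indicator unit_cube x * g x) \<in> borel_measurable M"
    using gm cube_borel M(1) unfolding measurable_cong_sets[OF M(1) refl]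
    using borel_measurable_times[OF borel_measurable_indicator[OF cube_borel] gm] by simp
  moreover have "AE x in M. norm (indicator unit_cube x * g x) \<le> norm (B * indicator unit_cube x :: real)"
    using B by (intro AE_I2) (auto split: split_indicator intro: order_trans[OF _ abs_ge_self])
  ultimately show ?thesis by (rule Bochner_Integration.integrable_bound)
qed

locale cubem =
  fixes M :: "'a::euclidean_space measure"
  assumes M_sets: "sets M = sets borel" and M_fin: "emeasure M unit_cube < \<infinity>"
begin

lemma int: "bnd g \<Longrightarrow> integrable M (\<lambda>x. indicator unit_cube x * g x)"
  using integrable_cube[OF M_sets M_fin] .

lemma ci_add: "bnd g \<Longrightarrow> bnd h \<Longrightarrow> cube_int M (\<lambda>x. g x + h x) = cube_int M g + cube_int M h"
  unfolding cube_int_eq by (simp add: distrib_left int)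

lemma ci_cmult: "cube_int M (\<lambda>x. c * g x) = c * cube_int M g"
  unfolding cube_int_eq by (simp add: mult.left_commute)

lemma ci_diff: "bnd g \<Longrightarrow> bnd h \<Longrightarrow> cube_int M (\<lambda>x. g x - h x) = cube_int M g - cube_int M h"
  unfolding cube_int_eq by (simp add: right_diff_distrib int)

lemma ci_sum: "finite A \<Longrightarrow> (\<And>i. i \<in> A \<Longrightarrow> bnd (g i)) \<Longrightarrow>
   cube_int M (\<lambda>x. \<Sum>i\<in>A. g i x) = (\<Sum>i\<in>A. cube_int M (g i))"
  unfolding cube_int_eq sum_distrib_left
  by (rule Bochner_Integration.integral_sum[where f="\<lambda>i x. indicator unit_cube x * g i x"]) (simp add: int)

lemma ci_const: "cube_int M (\<lambda>x. c) = c * measure M unit_cube"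
proof -
  have "unit_cube \<in> sets M" using M_sets cube_borel by simp
  then show ?thesis unfolding cube_int_eq by (simp add: mult.commute inf.absorb1 sets.sets_into_space)
qed

lemma ci_mono: "bnd g \<Longrightarrow> bnd h \<Longrightarrow> (\<And>x. x \<in> unit_cube \<Longrightarrow> g x \<le> h x) \<Longrightarrow> cube_int M g \<le> cube_int M h"
  unfolding cube_int_eq by (intro integral_mono int) (auto split: split_indicator)

lemma ci_indicator: "A \<in> sets borel \<Longrightarrow> cube_int M (indicator A) = measure M (unit_cube \<inter> A)"
proof -
  assume A: "A \<in> sets borel"
  have "(\<lambda>x. indicator unit_cube x * indicator A x :: real) = indicator (unit_cube \<inter> A)"
    by (auto split: split_indicator)
  moreover have "unit_cube \<inter> A \<in> sets M" using A cube_borel M_sets by auto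
  ultimately show ?thesis unfolding cube_int_eq
    by (simp add: inf.absorb1 sets.sets_into_space)
qed

end


theorem lemma2p3:
  fixes \<mu> :: "'a::euclidean_space measure"
    and E :: "nat \<Rightarrow> 'a set"
    and f :: "nat \<Rightarrow> 'a \<Rightarrow> real"
    and C :: real
  assumes mu_borel: "sets \<mu> = sets borel"
    and mu_prob: "prob_space \<mu>"
    and mu_cube: "emeasure \<mu> unit_cube = 1"
    and E_borel: "\<And>n. n \<ge> 1 \<Longrightarrow> E n \<in> sets borel"
    and E_bounded: "\<And>n. n \<ge> 1 \<Longrightarrow> bounded (E n)"
    and C_ge: "C \<ge> 1"
    and f_nonneg: "\<And>n x. n \<ge> 1 \<Longrightarrow> f n x \<ge> 0"
    and f_bounded: "\<And>n. n \<ge> 1 \<Longrightarrow> \<exists>B. \<forall>x. f n x \<le> B"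
    and f_meas: "\<And>n. n \<ge> 1 \<Longrightarrow> f n \<in> borel_measurable borel"
    and f_supp: "\<And>n x. n \<ge> 1 \<Longrightarrow> x \<notin> E n \<Longrightarrow> f n x = 0"
    and etp: "ETP f \<mu>"
    and vtp: "VTP f \<mu>"
    and diverge: "\<not> summable (\<lambda>n. cube_int leb (f (Suc n)))"
    and overlap: "\<exists>h. Bseq h \<and> (\<forall>N. (\<Sum>m\<in>{1..N}. \<Sum>n\<in>{1..N}. cube_int leb (\<lambda>x. f m x * f n x))
                     \<le> C * (E_N leb f N)\<^sup>2 + h N)"
  shows "measure \<mu> (limsup E) \<ge> 1 / C"
proof -
  interpret P: prob_space \<mu> by (rule mu_prob)
  interpret Mu: cubem \<mu> using mu_borel mu_cube by unfold_locales simp_all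
  interpret Lb: cubem "lborel :: 'a measure"
    by unfold_locales (simp_all add: unit_cube_def emeasure_lborel_cbox_finite)
  have mu1: "measure \<mu> unit_cube = 1" using mu_cube by (simp add: measure_def)
  have lb1: "measure lborel (unit_cube :: 'a set) = 1"
    unfolding unit_cube_def by simp
  have bf: "bnd (f n)" if n1: "n \<ge> 1" for n
  proof -
    obtain B where "\<forall>x. f n x \<le> B" using f_bounded[OF n1] by blast
    then show ?thesis unfolding bnd_def using f_meas[OF n1] f_nonneg[OF n1]
      by (intro conjI exI[of _ B]) auto
  qed
  define S where "S N x = (\<Sum>n\<in>{1..N}. f n x)" for N x
  define L where "L N = E_N lborel f N" for N
  define Em where "Em N = E_N \<mu> f N" for N
  define J where "J N = cube_int \<mu> (\<lambda>x. (S N x)\<^sup>2)" for N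
  define D where "D N = (\<Sum>m\<in>{1..N}. \<Sum>n\<in>{1..N}. cube_int leb (\<lambda>x. f m x * f n x))" for N
  have bS: "bnd (S N)" for N unfolding S_def by (intro bnd_sum bf) auto
  have F1: "cube_int \<mu> (S N) = Em N" for N
    unfolding S_def Em_def E_N_def by (rule Mu.ci_sum) (auto intro: bf)
  have F2: "cube_int lborel (S N) = L N" for N
    unfolding S_def L_def E_N_def by (rule Lb.ci_sum) (auto intro: bf)
  have Vform: "V_N M f N = cube_int M (\<lambda>x. (S N x)\<^sup>2) - 2 * L N * cube_int M (S N) + (L N)\<^sup>2"
    if "cubem M" "measure M unit_cube = 1" for M N
  proof -
    interpret MM: cubem M by (rule that)
    have e: "(\<lambda>x. (\<Sum>n\<in>{1..N}. f n x - cube_int leb (f n))\<^sup>2) = (\<lambda>x. (S N x - L N)\<^sup>2)"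
      by (simp add: sum_subtractf S_def L_def E_N_def)
    have "V_N M f N = cube_int M (\<lambda>x. (S N x - L N)\<^sup>2)"
      unfolding V_N_def e by (simp add: cube_int_def)
    also have "\<dots> = cube_int M (\<lambda>x. ((S N x)\<^sup>2 - (2 * L N) * S N x) + (L N)\<^sup>2)"
      by (intro arg_cong[where f="cube_int M"] ext) (simp add: power2_diff algebra_simps)
    also have "\<dots> = cube_int M (\<lambda>x. (S N x)\<^sup>2) - 2 * L N * cube_int M (S N) + (L N)\<^sup>2"
      using bS[of N] that(2)
      by (simp add: MM.ci_add MM.ci_diff MM.ci_cmult MM.ci_const bnd_diff bnd_sq bnd_mult bnd_const)
    finally show ?thesis .
  qed
  have F4: "cube_int lborel (\<lambda>x. (S N x)\<^sup>2) = D N" for N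
  proof -
    have "(\<lambda>x. (S N x)\<^sup>2) = (\<lambda>x. \<Sum>m\<in>{1..N}. \<Sum>n\<in>{1..N}. f m x * f n x)"
      by (simp add: S_def power2_eq_square sum_product)
    then have "cube_int lborel (\<lambda>x. (S N x)\<^sup>2) = cube_int leb (\<lambda>x. \<Sum>m\<in>{1..N}. \<Sum>n\<in>{1..N}. f m x * f n x)"
      by simp
    also have "\<dots> = (\<Sum>m\<in>{1..N}. cube_int leb (\<lambda>x. \<Sum>n\<in>{1..N}. f m x * f n x))"
      by (rule Lb.ci_sum[where g="\<lambda>m x. \<Sum>n\<in>{1..N}. f m x * f n x"]) (auto intro!: bnd_sum bnd_mult bf)
    also have "\<dots> = D N" unfolding D_def
      by (intro sum.cong refl Lb.ci_sum[where g="\<lambda>n x. f _ x * f n x"]) (auto intro!: bnd_mult bf)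
    finally show ?thesis .
  qed
  have VM: "V_N \<mu> f N = J N - 2 * L N * Em N + (L N)\<^sup>2" for N
    using Vform[of \<mu> N] Mu.cubem_axioms mu1 F1 J_def by simp
  have VL: "V_N lborel f N = D N - (L N)\<^sup>2" for N
    using Vform[of lborel N] Lb.cubem_axioms lb1 F2 F4 by (simp add: power2_eq_square)

  obtain h0 where h0: "Bseq h0" "\<And>N. D N \<le> C * (L N)\<^sup>2 + h0 N"
    using overlap unfolding D_def L_def by blast
  obtain s g1 h1 where s: "strict_mono s" and g1: "g1 \<longlonglongrightarrow> 0" and h1: "Bseq h1"
    and vtpe: "\<And>j. V_N \<mu> f (s j) = V_N leb f (s j) + g1 j * (Em (s j))\<^sup>2 + h1 j"
    using vtp unfolding VTP_def Em_def by blast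
  obtain g2 h2 where g2: "g2 \<longlonglongrightarrow> 0" and h2: "Bseq h2"
    and etpe: "\<And>N. Em N = (1 + g2 N) * L N + h2 N"
    using etp unfolding ETP_def Em_def L_def by blast
  obtain K0 where K0: "\<And>n. \<bar>h0 n\<bar> \<le> K0" using h0(1) by (metis BseqE real_norm_def less_imp_le)
  obtain K1 where K1: "\<And>n. \<bar>h1 n\<bar> \<le> K1" using h1 by (metis BseqE real_norm_def less_imp_le)
  obtain K2 where K2: "\<And>n. \<bar>h2 n\<bar> \<le> K2" using h2 by (metis BseqE real_norm_def less_imp_le)
  define K where "K = K0 + K1"
  have JB: "J (s j) \<le> (C - 2) * (L (s j))\<^sup>2 + K + g1 j * (Em (s j))\<^sup>2 + 2 * L (s j) * Em (s j)" for j
    using VM[of "s j"] VL[of "s j"] vtpe[of j] h0(2)[of "s j"] K0[of "s j"] K1[of j]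
    unfolding K_def by (simp add: algebra_simps)
  define T where "T M = (\<Union>n. E (Suc M + n))" for M
  have Tb: "T M \<in> sets borel" for M
    unfolding T_def using E_borel by (intro sets.countable_UN) auto
  have LB: "(2 * c * (Em N - Em M) - J N) / c\<^sup>2 \<le> measure \<mu> (T M)"
    if MN: "M \<le> N" and c: "c > 0" for M N c
  proof -
    define S' where "S' x = (\<Sum>n\<in>{Suc M..N}. f n x)" for x
    have bS': "bnd S'" unfolding S'_def by (intro bnd_sum bf) auto
    have split: "(\<Sum>n\<in>{1..N}. g n) = (\<Sum>n\<in>{1..M}. g n) + (\<Sum>n\<in>{Suc M..N}. g n)" for g :: "nat \<Rightarrow> real"
    proof -
      have "{1..N} = {1..M} \<union> {Suc M..N}" using MN by auto
      then show ?thesis by (simp add: sum.union_disjoint) 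
    qed
    have I1: "cube_int \<mu> S' = Em N - Em M"
      unfolding S'_def Em_def E_N_def using split[of "\<lambda>n. cube_int \<mu> (f n)"] by (subst Mu.ci_sum) (auto intro: bf)
    have pw1: "2 * c * S' x - c\<^sup>2 * indicator (T M) x \<le> (S' x)\<^sup>2" for x
    proof (cases "S' x = 0")
      case True then show ?thesis by (simp split: split_indicator)
    next
      case False
      then obtain n where n: "n \<in> {Suc M..N}" "f n x \<noteq> 0" unfolding S'_def
        by (meson sum.neutral)
      then have "x \<in> E n" using f_supp[of n x] by auto
      then have "x \<in> T M" unfolding T_def using n(1)
        by (auto intro!: exI[of _ "n - Suc M"])
      then have "indicator (T M) x = (1::real)" by simp
      moreover have "0 \<le> (S' x - c)\<^sup>2" by simp
      ultimately show ?thesis by (simp add: power2_diff algebra_simps)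
    qed
    have pw2: "(S' x)\<^sup>2 \<le> (S N x)\<^sup>2" for x
    proof -
      have "0 \<le> S' x" unfolding S'_def by (intro sum_nonneg f_nonneg) auto
      moreover have "S' x \<le> S N x" unfolding S'_def S_def
        by (intro sum_mono2) (auto intro: f_nonneg)
      ultimately show ?thesis by (intro power_mono) auto
    qed
    have "cube_int \<mu> (\<lambda>x. 2 * c * S' x - c\<^sup>2 * indicator (T M) x) \<le> cube_int \<mu> (\<lambda>x. (S' x)\<^sup>2)"
      using pw1 bS' Tb by (intro Mu.ci_mono) (auto intro!: bnd_diff bnd_mult bnd_const bnd_indicator bnd_sq)
    also have "\<dots> \<le> J N" unfolding J_def
      using pw2 bS' bS by (intro Mu.ci_mono) (auto intro: bnd_sq)
    finally have "cube_int \<mu> (\<lambda>x. 2 * c * S' x - c\<^sup>2 * indicator (T M) x) \<le> J N" .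
    moreover have "cube_int \<mu> (\<lambda>x. 2 * c * S' x - c\<^sup>2 * indicator (T M) x)
       = 2 * c * (Em N - Em M) - c\<^sup>2 * measure \<mu> (unit_cube \<inter> T M)"
      using bS' Tb I1 by (simp add: Mu.ci_diff Mu.ci_cmult Mu.ci_indicator bnd_mult bnd_const bnd_indicator)
    moreover have "measure \<mu> (unit_cube \<inter> T M) \<le> measure \<mu> (T M)"
      using Tb mu_borel by (intro P.finite_measure_mono) auto
    ultimately have "2 * c * (Em N - Em M) - J N \<le> c\<^sup>2 * measure \<mu> (T M)"
      using c by (smt (verit) mult_left_mono zero_le_power2)
    then show ?thesis using c by (simp add: pos_divide_le_eq mult.commute)
  qed

  have an: "0 \<le> cube_int leb (f n)" if n1: "n \<ge> 1" for n
    using Lb.ci_mono[of "\<lambda>x. 0" "f n"] bf[OF n1] f_nonneg[OF n1] Lb.ci_const[of 0]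
    by (simp add: bnd_const)
  have Lt: "filterlim L at_top sequentially"
    unfolding filterlim_at_top
  proof (intro allI)
    fix Z :: real
    have "\<exists>n. Z < (\<Sum>k\<le>n. cube_int leb (f (Suc k)))"
    proof (rule ccontr)
      assume "\<not> ?thesis"
      then have "\<And>n. (\<Sum>k\<le>n. cube_int leb (f (Suc k))) \<le> Z" by (simp add: not_less)
      then have "summable (\<lambda>n. cube_int leb (f (Suc n)))"
        by (intro bounded_imp_summable) (auto intro: an)
      with diverge show False by contradiction
    qed
    then obtain n where n: "Z < (\<Sum>k\<le>n. cube_int leb (f (Suc k)))" by blast
    have "Z \<le> L N" if NN: "N \<ge> Suc n" for N
    proof -
      have "(\<Sum>k\<le>n. cube_int leb (f (Suc k))) = (\<Sum>k\<in>{Suc 0..Suc n}. cube_int leb (f k))"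
        by (subst sum.shift_bounds_cl_Suc_ivl) (simp add: atLeast0AtMost)
      also have "\<dots> \<le> L N" unfolding L_def E_N_def using NN
        by (intro sum_mono2) (auto intro: an)
      finally show ?thesis using n by simp
    qed
    then show "eventually (\<lambda>N. Z \<le> L N) sequentially" unfolding eventually_sequentially by blast
  qed
  have Ls: "filterlim (\<lambda>j. L (s j)) at_top sequentially"
    by (rule filterlim_compose[OF Lt filterlim_subseq[OF s]])
  have Linf: "filterlim (\<lambda>j. L (s j)) at_infinity sequentially"
    by (rule filterlim_at_top_imp_at_infinity[OF Ls])
  have Lpos: "eventually (\<lambda>j. L (s j) > 0) sequentially"
    using Ls unfolding filterlim_at_top_dense by blast
  have div0: "(\<lambda>j. a / L (s j)) \<longlonglongrightarrow> 0" for a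
    by (rule tendsto_divide_0[OF tendsto_const Linf])
  have g2s: "(\<lambda>j. g2 (s j)) \<longlonglongrightarrow> 0" using LIMSEQ_subseq_LIMSEQ[OF g2 s] by (simp add: o_def)
  have h2s: "(\<lambda>j. h2 (s j) / L (s j)) \<longlonglongrightarrow> 0"
  proof (rule Lim_null_comparison[OF _ div0[of K2]])
    show "eventually (\<lambda>j. norm (h2 (s j) / L (s j)) \<le> K2 / L (s j)) sequentially"
      using Lpos by eventually_elim (simp add: abs_divide divide_right_mono K2)
  qed
  define r where "r j = Em (s j) / L (s j)" for j
  have rlim: "r \<longlonglongrightarrow> 1"
  proof -
    have "(\<lambda>j. (1 + g2 (s j)) + h2 (s j) / L (s j)) \<longlonglongrightarrow> (1 + 0) + 0"
      by (intro tendsto_intros g2s h2s)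
    then have lim1: "(\<lambda>j. (1 + g2 (s j)) + h2 (s j) / L (s j)) \<longlonglongrightarrow> 1" by simp
    have eq: "eventually (\<lambda>j. (1 + g2 (s j)) + h2 (s j) / L (s j) = r j) sequentially"
      using Lpos
    proof eventually_elim
      case (elim j)
      then show ?case unfolding r_def etpe[of "s j"] by (simp add: add_divide_distrib)
    qed
    show ?thesis by (rule iffD1[OF tendsto_cong[OF eq] lim1])
  qed
  have Cpos: "C > 0" using C_ge by simp
  have TM: "1 / C \<le> measure \<mu> (T M)" for M
  proof -
    define y where "y j = (2*C*L (s j)*(Em (s j) - Em M) - ((C-2)*(L (s j))\<^sup>2 + K + g1 j*(Em (s j))\<^sup>2
        + 2*L (s j)*Em (s j))) / (C*L (s j))\<^sup>2" for j
    define z where "z j = (2*C*(r j - Em M / L (s j)) - (C-2) - K / L (s j) / L (s j)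
        - g1 j * (r j)\<^sup>2 - 2 * r j) / C\<^sup>2" for j
    have "z \<longlonglongrightarrow> (2*C*(1 - 0) - (C-2) - 0 - 0 * 1\<^sup>2 - 2 * 1) / C\<^sup>2"
      unfolding z_def by (intro tendsto_intros rlim div0 g1 tendsto_divide_0[OF div0 Linf]) (use Cpos in simp)
    then have zl: "z \<longlonglongrightarrow> 1 / C" using Cpos by (simp add: power2_eq_square)
    have ev: "eventually (\<lambda>j. z j \<le> measure \<mu> (T M)) sequentially"
      using Lpos eventually_ge_at_top[of M]
    proof eventually_elim
      case (elim j)
      have sj: "M \<le> s j" using elim(2) seq_suble[OF s, of j] by linarith
      define c where "c = C * L (s j)"
      have c: "c > 0" unfolding c_def using Cpos elim(1) by simp
      have "z j = y j" unfolding z_def y_def r_def using elim(1) Cpos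
        by (simp add: field_simps power2_eq_square)
      also have "y j \<le> (2 * c * (Em (s j) - Em M) - J (s j)) / c\<^sup>2"
        unfolding y_def c_def using JB[of j] by (intro divide_right_mono) (simp_all add: mult.assoc)
      also have "\<dots> \<le> measure \<mu> (T M)" by (rule LB[OF sj c])
      finally show ?case .
    qed
    show ?thesis by (rule tendsto_upperbound[OF zl ev]) simp
  qed
  have dec: "decseq T"
  proof (rule decseq_SucI)
    fix n show "T (Suc n) \<subseteq> T n" unfolding T_def
    proof
      fix x assume "x \<in> (\<Union>i. E (Suc (Suc n) + i))"
      then obtain i where "x \<in> E (Suc (Suc n) + i)" by blast
      then have "x \<in> E (Suc n + Suc i)" by simp
      then show "x \<in> (\<Union>i. E (Suc n + i))" by blast
    qed
  qed
  have lim: "limsup E = (\<Inter>M. T M)"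
  proof
    show "limsup E \<subseteq> (\<Inter>M. T M)"
    proof
      fix x assume "x \<in> limsup E"
      then have a: "\<forall>n. \<exists>m\<ge>n. x \<in> E m" unfolding limsup_INF_SUP by auto
      show "x \<in> (\<Inter>M. T M)" unfolding T_def
      proof
        fix M
        obtain m where "m \<ge> Suc M" "x \<in> E m" using a by blast
        then have "x \<in> E (Suc M + (m - Suc M))" by simp
        then show "x \<in> (\<Union>i. E (Suc M + i))" by blast
      qed
    qed
    show "(\<Inter>M. T M) \<subseteq> limsup E"
    proof
      fix x assume a: "x \<in> (\<Inter>M. T M)"
      have "\<exists>m\<ge>n. x \<in> E m" for n
      proof -
        from a have "x \<in> T n" by blast
        then obtain i where "x \<in> E (Suc n + i)" unfolding T_def by blast
        then show ?thesis by (intro exI[of _ "Suc n + i"]) auto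
      qed
      then show "x \<in> limsup E" unfolding limsup_INF_SUP by auto
    qed
  qed
  have "(\<lambda>M. measure \<mu> (T M)) \<longlonglongrightarrow> measure \<mu> (\<Inter>M. T M)"
    using Tb mu_borel dec by (intro P.finite_Lim_measure_decseq) auto
  then have "1 / C \<le> measure \<mu> (\<Inter>M. T M)"
    by (rule tendsto_lowerbound) (auto intro!: always_eventually TM)
  then show ?thesis using lim by simp
qed
end
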